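(* Let $n\ge 2$, let $\mathcal{B}$ be a maximal commutative subalgebra of $\mathcal{M}_{d\times d}(\mathbb{C})$, and let $\mathcal{A}$ be a maximal subalgebra of $\mathcal{T}_{n,d}(\mathcal{B})$ (i.e. an algebra contained in $\mathcal{T}_{n,d}(\mathcal{B})$ not properly contained in any other algebra contained in $\mathcal{T}_{n,d}(\mathcal{B})$). Suppose $\mathcal{A}$ contains an element $\mathbf{T}=(T_{p-q})_{p,q=0}^{n-1}$ such that $T_p$ is invertible for some $p\neq 0$. Then $\mathcal{A}=\mathcal{F}_{A,B}^{\mathcal{B}}$ for some $A,B\in\mathcal{B}$.
   Context: For positive integers $n,d$, $\mathcal{T}_{n,d}$ denotes the set of block Toeplitz matrices $\mathbf{T}=(T_{p-q})_{p,q=0}^{n-1}$: $nd\times nd$ complex matrices partitioned into $n\times n$ blocks of size $d\times d$, whose $(p,q)$ block is $T_{p-q}$ for some $T_{-(n-1)},\dots,T_{n-1}\in\mathcal{M}_{d\times d}(\mathbb{C})$. For a subalgebra $\mathcal{B}\subseteq\mathcal{M}_{d\times d}(\mathbb{C})$, $\mathcal{T}_{n,d}(\mathcal{B})$ is the set of $\mathbf{T}\in\mathcal{T}_{n,d}$ with all $T_j\in\mathcal{B}$. An algebra contained in a set of matrices is a subset that is a linear subspace closed under matrix multiplication. For $A,B\in\mathcal{M}_{d\times d}(\mathbb{C})$, $$\mathcal{F}_{A,B}^{\mathcal{B}}=\{(T_{p-q})_{p,q=0}^{n-1}\in\mathcal{T}_{n,d}(\mathcal{B}) : AT_j=BT_{j-n}\text{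 for } j=1,2,\dots,n-1\}.$$ A maximal commutative subalgebra of $\mathcal{M}_{d\times d}(\mathbb{C})$ is a commutative subalgebra not properly contained in any commutative subalgebra. *)

theory Defs
  imports "Jordan_Normal_Form.Matrix"
begin

text \<open>A subalgebra of M_N(C): a linear subspace closed under multiplication
  (no unit required).\<close>
definition matrix_subalgebra :: "nat \<Rightarrow> complex mat set \<Rightarrow> bool" where
  "matrix_subalgebra N S \<longleftrightarrow>
     S \<subseteq> carrier_mat N N \<and> 0\<^sub>m N N \<in> S \<and>
     (\<forall>a\<in>S. \<forall>b\<in>S. a + b \<in> S) \<and>
     (\<forall>c a. a \<in> S \<longrightarrow> c \<cdot>\<^sub>m a \<in> S) \<and>
     (\<forall>a\<in>S. \<forall>b\<in>S. a * b \<in> S)"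

definition algebra_in :: "nat \<Rightarrow> complex mat set \<Rightarrow> complex mat set \<Rightarrow> bool" where
  "algebra_in N S X \<longleftrightarrow> matrix_subalgebra N S \<and> S \<subseteq> X"

definition maximal_algebra_in :: "nat \<Rightarrow> complex mat set \<Rightarrow> complex mat set \<Rightarrow> bool" where
  "maximal_algebra_in N S X \<longleftrightarrow>
     algebra_in N S X \<and> (\<forall>S'. algebra_in N S' X \<and> S \<subseteq> S' \<longrightarrow> S' = S)"

definition commutative_set :: "complex mat set \<Rightarrow> bool" where
  "commutative_set S \<longleftrightarrow> (\<forall>a\<in>S. \<forall>b\<in>S. a * b = b * a)"

definition maximal_commutative_subalgebra :: "nat \<Rightarrow> complex mat set \<Rightarrow> bool" where
  "maximal_commutative_subalgebra d B \<longleftrightarrow>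
     matrix_subalgebra d B \<and> commutative_set B \<and>
     (\<forall>C. matrix_subalgebra d C \<and> commutative_set C \<and> B \<subseteq> C \<longrightarrow> C = B)"

text \<open>The nd x nd block Toeplitz matrix (T_{p-q})_{p,q=0}^{n-1} with d x d blocks;
  only the values T j for |j| \<le> n-1 are used.\<close>
definition block_toeplitz :: "nat \<Rightarrow> nat \<Rightarrow> (int \<Rightarrow> complex mat) \<Rightarrow> complex mat" where
  "block_toeplitz n d T =
     mat (n * d) (n * d)
       (\<lambda>(i, j). T (int (i div d) - int (j div d)) $$ (i mod d, j mod d))"

definition blocks_in :: "nat \<Rightarrow> complex mat set \<Rightarrow> (int \<Rightarrow> complex mat) \<Rightarrow> bool" where
  "blocks_in n B T \<longleftrightarrow> (\<forall>j::int. \<bar>j\<bar> \<le> int n - 1 \<longrightarrow> T j \<in> B)"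

definition toeplitz_set :: "nat \<Rightarrow> nat \<Rightarrow> complex mat set \<Rightarrow> complex mat set" where
  "toeplitz_set n d B = {block_toeplitz n d T | T. blocks_in n B T}"

definition F_set :: "nat \<Rightarrow> nat \<Rightarrow> complex mat set \<Rightarrow> complex mat \<Rightarrow> complex mat \<Rightarrow> complex mat set" where
  "F_set n d \<B> A B = {block_toeplitz n d T | T. blocks_in n \<B> T \<and>
       (\<forall>j::int. 1 \<le> j \<and> j \<le> int n - 1 \<longrightarrow> A * T j = B * T (j - int n))}"

end

theory Submission
  imports Defs
begin

lemma bt_dim[simp]: "block_toeplitz n d T \<in> carrier_mat (n*d) (n*d)"
  "dim_row (block_toeplitz n d T) = n*d" "dim_col (block_toeplitz n d T) = n*d"
  by (auto simp: block_toeplitz_def)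

lemma bt_index: "i < n*d \<Longrightarrow> j < n*d \<Longrightarrow>
  block_toeplitz n d T $$ (i,j) = T (int (i div d) - int (j div d)) $$ (i mod d, j mod d)"
  by (simp add: block_toeplitz_def)

lemma sum_split: fixes n d :: nat shows "(\<Sum>x<n*d. f x) = (\<Sum>k<n. \<Sum>c<d. f (k*d+c))"
proof (induction n)
  case 0 then show ?case by simp
next
  case (Suc n)
  have "(\<Sum>x<Suc n*d. f x) = (\<Sum>x<n*d. f x) + (\<Sum>x\<in>{n*d..<n*d+d}. f x)"
    by (simp add: sum.lessThan_Suc add.commute sum.atLeastLessThan_concat[symmetric] lessThan_atLeast0
      flip: sum.atLeastLessThan_concat)
  also have "(\<Sum>x\<in>{n*d..<n*d+d}. f x) = (\<Sum>c<d. f (n*d+c))"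
    using sum.shift_bounds_nat_ivl[of f 0 "n*d" d] by (simp add: lessThan_atLeast0 add.commute)
  finally show ?case using Suc by simp
qed

definition dims :: "nat \<Rightarrow> nat \<Rightarrow> (int \<Rightarrow> complex mat) \<Rightarrow> bool" where
  "dims n d S \<longleftrightarrow> (\<forall>j. \<bar>j\<bar> \<le> int n - 1 \<longrightarrow> S j \<in> carrier_mat d d)"

lemma dimsD: "dims n d S \<Longrightarrow> p < n \<Longrightarrow> k < n \<Longrightarrow> S (int p - int k) \<in> carrier_mat d d"
  unfolding dims_def by auto

lemma idx_lt: fixes p n a d :: nat shows "p < n \<Longrightarrow> a < d \<Longrightarrow> p*d+a < n*d"
proof -
  assume "p < n" "a < d"
  then have "p*d+a < Suc p * d" by simp
  also have "\<dots> \<le> n*d" using \<open>p<n\<close> by (metis Suc_leI mult_le_mono1)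
  finally show ?thesis .
qed

lemma idx_div: fixes a d p :: nat shows "a < d \<Longrightarrow> (p*d+a) div d = p" "a < d \<Longrightarrow> (p*d+a) mod d = a"
  by auto

lemma prod_entry:
  assumes S: "dims n d S" and R: "dims n d R" and pq: "p < n" "q < n" and ab: "a < d" "b < d"
  shows "(block_toeplitz n d S * block_toeplitz n d R) $$ (p*d+a, q*d+b)
       = (\<Sum>k<n. (S (int p - int k) * R (int k - int q)) $$ (a,b))"
proof -
  have i: "p*d+a < n*d" "q*d+b < n*d"
    using pq ab by (auto intro: idx_lt)
  have "(block_toeplitz n d S * block_toeplitz n d R) $$ (p*d+a, q*d+b)
     = (\<Sum>x<n*d. block_toeplitz n d S $$ (p*d+a, x) * block_toeplitz n d R $$ (x, q*d+b))"
    using i by (simp add: scalar_prod_def lessThan_atLeast0)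
  also have "\<dots> = (\<Sum>k<n. \<Sum>c<d. block_toeplitz n d S $$ (p*d+a, k*d+c) * block_toeplitz n d R $$ (k*d+c, q*d+b))"
    by (rule sum_split)
  also have "\<dots> = (\<Sum>k<n. \<Sum>c<d. S (int p - int k) $$ (a,c) * R (int k - int q) $$ (c,b))"
  proof (intro sum.cong refl)
    fix k c assume k: "k \<in> {..<n}" and c: "c \<in> {..<d}"
    have kc: "k*d+c < n*d" using k c by (auto intro: idx_lt)
    show "block_toeplitz n d S $$ (p*d+a, k*d+c) * block_toeplitz n d R $$ (k*d+c, q*d+b)
       = S (int p - int k) $$ (a,c) * R (int k - int q) $$ (c,b)"
      using i kc ab c by (simp add: bt_index)
  qed
  also have "\<dots> = (\<Sum>k<n. (S (int p - int k) * R (int k - int q)) $$ (a,b))"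
  proof (intro sum.cong refl)
    fix k assume k: "k \<in> {..<n}"
    have "S (int p - int k) \<in> carrier_mat d d" using dimsD[OF S pq(1)] k by auto
    moreover have "R (int k - int q) \<in> carrier_mat d d" using dimsD[OF R _ pq(2)] k by auto
    ultimately show "(\<Sum>c<d. S (int p - int k) $$ (a,c) * R (int k - int q) $$ (c,b))
       = (S (int p - int k) * R (int k - int q)) $$ (a,b)"
      using ab by (simp add: scalar_prod_def lessThan_atLeast0)
  qed
  finally show ?thesis .
qed

lemma bt_entry_blk: "p < n \<Longrightarrow> q < n \<Longrightarrow> a < d \<Longrightarrow> b < d \<Longrightarrow>
  block_toeplitz n d U $$ (p*d+a, q*d+b) = U (int p - int q) $$ (a,b)"
  by (simp add: bt_index idx_lt)

lemma shift_nat: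
  assumes S: "dims n d S" and R: "dims n d R" and U: "block_toeplitz n d S * block_toeplitz n d R = block_toeplitz n d U"
    and pq: "Suc p < n" "Suc q < n" and ab: "a < d" "b < d"
  shows "(S (int p + 1) * R (- int q - 1)) $$ (a,b) = (S (int p + 1 - int n) * R (int n - 1 - int q)) $$ (a,b)"
proof -
  obtain m where m: "n = Suc m" using pq by (cases n) auto
  define f where "f u v = (S u * R v) $$ (a,b)" for u v
  have "(\<Sum>k<n. f (int (Suc p) - int k) (int k - int (Suc q))) = (\<Sum>k<n. f (int p - int k) (int k - int q))"
  proof -
    have "(\<Sum>k<n. f (int (Suc p) - int k) (int k - int (Suc q)))
        = (block_toeplitz n d S * block_toeplitz n d R) $$ (Suc p*d+a, Suc q*d+b)"
      unfolding f_def using prod_entry[OF S R pq ab] by simp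
    also have "\<dots> = U (int p - int q) $$ (a,b)" unfolding U using bt_entry_blk[of "Suc p" n "Suc q" a d b U] pq ab by simp
    also have "\<dots> = (block_toeplitz n d S * block_toeplitz n d R) $$ (p*d+a, q*d+b)"
      unfolding U using pq ab by (simp add: bt_entry_blk)
    also have "\<dots> = (\<Sum>k<n. f (int p - int k) (int k - int q))"
      unfolding f_def using prod_entry[OF S R _ _ ab, of p q] pq by simp
    finally show ?thesis .
  qed
  moreover have "(\<Sum>k<n. f (int (Suc p) - int k) (int k - int (Suc q)))
      = f (int p + 1) (- int q - 1) + (\<Sum>k<m. f (int p - int k) (int k - int q))"
  proof -
    have "(\<Sum>k<n. f (int (Suc p) - int k) (int k - int (Suc q)))
      = f (int (Suc p) - int 0) (int 0 - int (Suc q)) + (\<Sum>k<m. f (int (Suc p) - int (Suc k)) (int (Suc k) - int (Suc q)))"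
      unfolding m sum.lessThan_Suc_shift by simp
    moreover have e: "f (int p + 1) (- int q - 1) = f (1 + int p) (-1 - int q)"
      by (rule arg_cong2[where f=f]) simp_all
    ultimately show ?thesis unfolding e by (simp add: algebra_simps)
  qed
  moreover have "(\<Sum>k<n. f (int p - int k) (int k - int q))
      = (\<Sum>k<m. f (int p - int k) (int k - int q)) + f (int p - int m) (int m - int q)"
    unfolding m by simp
  ultimately have "f (int p + 1) (- int q - 1) = f (int p - int m) (int m - int q)" by simp
  then show ?thesis unfolding f_def m by (simp add: algebra_simps)
qed

lemma dims_car: "dims n d S \<Longrightarrow> \<bar>j\<bar> \<le> int n - 1 \<Longrightarrow> S j \<in> carrier_mat d d"
  unfolding dims_def by auto

lemma shift_int:
  assumes S: "dims n d S" and R: "dims n d R" and U: "block_toeplitz n d S * block_toeplitz n d R = block_toeplitz n d U"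
    and ij: "1 \<le> i" "i \<le> int n - 1" "1 \<le> j" "j \<le> int n - 1"
  shows "S i * R (j - int n) = S (i - int n) * R j"
proof -
  define p where "p = nat (i - 1)"
  define q where "q = nat (int n - 1 - j)"
  have pq: "Suc p < n" "Suc q < n" using ij unfolding p_def q_def by auto
  have e: "int p + 1 = i" "- int q - 1 = j - int n" "int n - 1 - int q = j"
    using ij unfolding p_def q_def by auto
  have c1: "S i \<in> carrier_mat d d" "R (j - int n) \<in> carrier_mat d d"
     "S (i - int n) \<in> carrier_mat d d" "R j \<in> carrier_mat d d"
    using ij by (auto intro!: dims_car[OF S] dims_car[OF R])
  show ?thesis
  proof (rule eq_matI)
    fix a b assume "a < dim_row (S (i - int n) * R j)" "b < dim_col (S (i - int n) * R j)"
    then have ab: "a < d" "b < d" using c1 by auto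
    show "(S i * R (j - int n)) $$ (a, b) = (S (i - int n) * R j) $$ (a, b)"
      using shift_nat[OF S R U pq ab] unfolding e by simp
  qed (use c1 in auto)
qed

lemma sum_step:
  fixes f :: "int \<Rightarrow> int \<Rightarrow> complex" and n :: nat
  assumes "n = Suc m"
  shows "(\<Sum>k<n. f (int (Suc p) - int k) (int k - int (Suc q))) - (\<Sum>k<n. f (int p - int k) (int k - int q))
     = f (int p + 1) (- int q - 1) - f (int p + 1 - int n) (int n - 1 - int q)"
proof -
  have A: "(\<Sum>k<n. f (int (Suc p) - int k) (int k - int (Suc q)))
      = f (int p + 1) (- int q - 1) + (\<Sum>k<m. f (int p - int k) (int k - int q))"
  proof -
    have "(\<Sum>k<n. f (int (Suc p) - int k) (int k - int (Suc q)))
      = f (int (Suc p) - int 0) (int 0 - int (Suc q)) + (\<Sum>k<m. f (int (Suc p) - int (Suc k)) (int (Suc k) - int (Suc q)))"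
      unfolding assms sum.lessThan_Suc_shift by simp
    moreover have e: "f (int p + 1) (- int q - 1) = f (1 + int p) (-1 - int q)"
      by (rule arg_cong2[where f=f]) simp_all
    ultimately show ?thesis unfolding e by (simp add: algebra_simps)
  qed
  have B: "(\<Sum>k<n. f (int p - int k) (int k - int q))
      = (\<Sum>k<m. f (int p - int k) (int k - int q)) + f (int p - int m) (int m - int q)"
    unfolding assms by simp
  have e2: "f (int p + 1 - int n) (int n - 1 - int q) = f (int p - int m) (int m - int q)"
    by (rule arg_cong2[where f=f]) (simp_all add: assms)
  show ?thesis unfolding A B e2 by simp
qed

definition Eq :: "nat \<Rightarrow> (int \<Rightarrow> complex mat) \<Rightarrow> (int \<Rightarrow> complex mat) \<Rightarrow> nat \<Rightarrow> nat \<Rightarrow> nat \<Rightarrow> nat \<Rightarrow> complex" where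
  "Eq n S R p q a b = (\<Sum>k<n. (S (int p - int k) * R (int k - int q)) $$ (a,b))"

definition shiftid :: "nat \<Rightarrow> (int \<Rightarrow> complex mat) \<Rightarrow> (int \<Rightarrow> complex mat) \<Rightarrow> bool" where
  "shiftid n S R \<longleftrightarrow> (\<forall>i j. 1 \<le> i \<and> i \<le> int n - 1 \<and> 1 \<le> j \<and> j \<le> int n - 1 \<longrightarrow>
      S i * R (j - int n) = S (i - int n) * R j)"

lemma Eq_step:
  assumes H: "shiftid n S R" and pq: "Suc p < n" "Suc q < n"
  shows "Eq n S R (Suc p) (Suc q) a b = Eq n S R p q a b"
proof -
  obtain m where m: "n = Suc m" using pq by (cases n) auto
  have "S (int p + 1) * R (- int q - 1) = S (int p + 1 - int n) * R (int n - 1 - int q)"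
  proof -
    have "S (int p + 1) * R ((int n - 1 - int q) - int n) = S (int p + 1 - int n) * R (int n - 1 - int q)"
      using H[unfolded shiftid_def, rule_format, of "int p + 1" "int n - 1 - int q"] pq by simp
    moreover have "(int n - 1 - int q) - int n = - int q - 1" by simp
    ultimately show ?thesis by simp
  qed
  then show ?thesis
    using sum_step[OF m, of "\<lambda>u v. (S u * R v) $$ (a,b)" p q] unfolding Eq_def by simp
qed

lemma Eq_shift:
  assumes H: "shiftid n S R"
  shows "p + r < n \<Longrightarrow> q + r < n \<Longrightarrow> Eq n S R (p + r) (q + r) a b = Eq n S R p q a b"
proof (induction r)
  case 0 then show ?case by simp
next
  case (Suc r)
  then have "Eq n S R (Suc (p + r)) (Suc (q + r)) a b = Eq n S R (p + r) (q + r) a b"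
    by (intro Eq_step[OF H]) auto
  then show ?case using Suc by simp
qed

lemma Eq_norm:
  assumes H: "shiftid n S R" and pq: "p < n" "q < n"
  shows "Eq n S R p q a b = (if int p - int q \<ge> 0 then Eq n S R (nat (int p - int q)) 0 a b
                             else Eq n S R 0 (nat (int q - int p)) a b)"
proof (cases "q \<le> p")
  case True
  then have "Eq n S R ((p - q) + q) (0 + q) a b = Eq n S R (p - q) 0 a b"
    using pq by (intro Eq_shift[OF H]) auto
  then show ?thesis using True by (simp add: nat_diff_distrib')
next
  case False
  then have "Eq n S R (0 + p) ((q - p) + p) a b = Eq n S R 0 (q - p) a b"
    using pq by (intro Eq_shift[OF H]) auto
  then show ?thesis using False by (simp add: nat_diff_distrib')
qed

definition Gm :: "nat \<Rightarrow> nat \<Rightarrow> (int \<Rightarrow> complex mat) \<Rightarrow> (int \<Rightarrow> complex mat) \<Rightarrow> nat \<Rightarrow> nat \<Rightarrow> complex mat" where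
  "Gm n d S R p q = mat d d (\<lambda>(a,b). Eq n S R p q a b)"

definition Uprod :: "nat \<Rightarrow> nat \<Rightarrow> (int \<Rightarrow> complex mat) \<Rightarrow> (int \<Rightarrow> complex mat) \<Rightarrow> int \<Rightarrow> complex mat" where
  "Uprod n d S R m = (if m \<ge> 0 then Gm n d S R (nat m) 0 else Gm n d S R 0 (nat (- m)))"

lemma prod_bt:
  assumes S: "dims n d S" and R: "dims n d R" and H: "shiftid n S R"
  shows "block_toeplitz n d S * block_toeplitz n d R = block_toeplitz n d (Uprod n d S R)"
proof (rule eq_matI)
  fix i j assume "i < dim_row (block_toeplitz n d (Uprod n d S R))" "j < dim_col (block_toeplitz n d (Uprod n d S R))"
  then have ij: "i < n*d" "j < n*d" by auto
  then have d: "d > 0" by (cases d) auto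
  define P where "P = i div d"
  define Q where "Q = j div d"
  define a where "a = i mod d"
  define b where "b = j mod d"
  have PQ: "P < n" "Q < n" unfolding P_def Q_def using ij
    by (simp_all add: less_mult_imp_div_less)
  have ab: "a < d" "b < d" unfolding a_def b_def using d by auto
  have i: "i = P*d + a" "j = Q*d + b" unfolding P_def Q_def a_def b_def by simp_all
  have "(block_toeplitz n d S * block_toeplitz n d R) $$ (i, j) = Eq n S R P Q a b"
    unfolding i Eq_def by (rule prod_entry[OF S R PQ ab])
  also have "\<dots> = Uprod n d S R (int P - int Q) $$ (a,b)"
    unfolding Eq_norm[OF H PQ] Uprod_def Gm_def using ab by simp
  also have "\<dots> = block_toeplitz n d (Uprod n d S R) $$ (i, j)"
    unfolding i using bt_entry_blk[OF PQ ab] by simp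
  finally show "(block_toeplitz n d S * block_toeplitz n d R) $$ (i, j) = block_toeplitz n d (Uprod n d S R) $$ (i, j)" .
qed auto

lemma sub_car: "matrix_subalgebra d \<B> \<Longrightarrow> X \<in> \<B> \<Longrightarrow> X \<in> carrier_mat d d"
  unfolding matrix_subalgebra_def by auto

lemma sum_in_B:
  fixes n :: nat and M :: "nat \<Rightarrow> complex mat"
  assumes B: "matrix_subalgebra d \<B>"
  shows "(\<forall>k<n. M k \<in> \<B>) \<Longrightarrow> mat d d (\<lambda>(a,b). \<Sum>k<n. M k $$ (a,b)) \<in> \<B>"
proof (induction n)
  case 0
  have z: "mat d d (\<lambda>(a,b). \<Sum>k<0. M k $$ (a,b)) = 0\<^sub>m d d" by (rule eq_matI) auto
  show ?case unfolding z using B unfolding matrix_subalgebra_def by blast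
next
  case (Suc n)
  have c: "M n \<in> carrier_mat d d" using Suc.prems sub_car[OF B] by auto
  have e: "mat d d (\<lambda>(a,b). \<Sum>k<Suc n. M k $$ (a,b)) = mat d d (\<lambda>(a,b). \<Sum>k<n. M k $$ (a,b)) + M n"
    by (rule eq_matI) (use c in auto)
  have "mat d d (\<lambda>(a,b). \<Sum>k<n. M k $$ (a,b)) \<in> \<B>"
  proof -
    have "\<forall>k<n. M k \<in> \<B>" using Suc.prems by auto
    then show ?thesis by (rule Suc.IH)
  qed
  moreover have "M n \<in> \<B>" using Suc.prems by auto
  ultimately show ?case unfolding e using B unfolding matrix_subalgebra_def by blast
qed

lemma blocks_dims: "matrix_subalgebra d \<B> \<Longrightarrow> blocks_in n \<B> S \<Longrightarrow> dims n d S"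
  unfolding blocks_in_def dims_def using sub_car by blast

lemma blocks_inD: "blocks_in n \<B> S \<Longrightarrow> p < n \<Longrightarrow> k < n \<Longrightarrow> S (int p - int k) \<in> \<B>"
  unfolding blocks_in_def by auto

lemma Gm_in:
  assumes B: "matrix_subalgebra d \<B>" and S: "blocks_in n \<B> S" and R: "blocks_in n \<B> R"
    and pq: "p < n" "q < n"
  shows "Gm n d S R p q \<in> \<B>"
  unfolding Gm_def Eq_def
proof (rule sum_in_B[OF B], intro allI impI)
  fix k assume k: "k < n"
  have "S (int p - int k) \<in> \<B>" "R (int k - int q) \<in> \<B>"
    using blocks_inD[OF S pq(1) k] blocks_inD[OF R k pq(2)] .
  then show "S (int p - int k) * R (int k - int q) \<in> \<B>" using B unfolding matrix_subalgebra_def by blast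
qed

lemma Uprod_blocks:
  assumes B: "matrix_subalgebra d \<B>" and S: "blocks_in n \<B> S" and R: "blocks_in n \<B> R"
  shows "blocks_in n \<B> (Uprod n d S R)"
  unfolding blocks_in_def Uprod_def
  by (auto intro!: Gm_in[OF B S R])

lemma mult_summat:
  assumes A: "A \<in> carrier_mat d d" and M: "\<forall>k<n. M k \<in> carrier_mat d d"
  shows "A * mat d d (\<lambda>(a,b). \<Sum>k<n. M k $$ (a,b)) = mat d d (\<lambda>(a,b). \<Sum>k<n. (A * M k) $$ (a,b))"
proof (rule eq_matI)
  fix a b assume ab: "a < dim_row (mat d d (\<lambda>(a,b). \<Sum>k<n. (A * M k) $$ (a,b)))"
    "b < dim_col (mat d d (\<lambda>(a,b). \<Sum>k<n. (A * M k) $$ (a,b)))"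
  then have ab: "a < d" "b < d" by auto
  have "(A * mat d d (\<lambda>(a,b). \<Sum>k<n. M k $$ (a,b))) $$ (a,b)
      = (\<Sum>c<d. A $$ (a,c) * (\<Sum>k<n. M k $$ (c,b)))"
    using A ab by (simp add: scalar_prod_def lessThan_atLeast0)
  also have "\<dots> = (\<Sum>k<n. \<Sum>c<d. A $$ (a,c) * M k $$ (c,b))"
    by (simp add: sum_distrib_left sum.swap[of _ "{..<d}"])
  also have "\<dots> = (\<Sum>k<n. (A * M k) $$ (a,b))"
  proof (intro sum.cong refl)
    fix k assume "k \<in> {..<n}"
    then have "M k \<in> carrier_mat d d" using M by auto
    then show "(\<Sum>c<d. A $$ (a,c) * M k $$ (c,b)) = (A * M k) $$ (a,b)"
      using A ab by (simp add: scalar_prod_def lessThan_atLeast0)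
  qed
  finally show "(A * mat d d (\<lambda>(a,b). \<Sum>k<n. M k $$ (a,b))) $$ (a,b) = mat d d (\<lambda>(a,b). \<Sum>k<n. (A * M k) $$ (a,b)) $$ (a,b)"
    using ab by simp
qed (use A in auto)

lemma reidx:
  fixes \<psi> :: "int \<Rightarrow> int \<Rightarrow> complex" and n jj :: nat
  assumes jj: "jj \<le> n"
  shows "(\<Sum>k<n. if k < jj then \<psi> (int jj - int k - int n) (int k) else \<psi> (int jj - int k) (int k - int n))
       = (\<Sum>k<n. \<psi> (0 - int k) (int k - int (n - jj)))"
proof -
  define g where "g k = (if k < jj then \<psi> (int jj - int k - int n) (int k) else \<psi> (int jj - int k) (int k - int n))" for k
  define h where "h k = \<psi> (0 - int k) (int k - int (n - jj))" for k
  have L: "(\<Sum>k<n. g k) = (\<Sum>k\<in>{0..<jj}. g k) + (\<Sum>k\<in>{jj..<n}. g k)"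
    using sum.atLeastLessThan_concat[of 0 jj n g] jj by (simp add: lessThan_atLeast0)
  have L1: "(\<Sum>k\<in>{0..<jj}. g k) = (\<Sum>k\<in>{0..<jj}. \<psi> (int jj - int k - int n) (int k))"
    by (rule sum.cong) (auto simp: g_def)
  have L2: "(\<Sum>k\<in>{jj..<n}. g k) = (\<Sum>i\<in>{0..<n-jj}. h i)"
  proof -
    have "(\<Sum>k\<in>{jj..<n}. g k) = (\<Sum>k\<in>{0+jj..<(n-jj)+jj}. g k)" using jj by simp
    also have "\<dots> = (\<Sum>i\<in>{0..<n-jj}. g (i+jj))" by (rule sum.shift_bounds_nat_ivl)
    also have "\<dots> = (\<Sum>i\<in>{0..<n-jj}. h i)"
    proof (rule sum.cong[OF refl])
      fix i assume "i \<in> {0..<n-jj}"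
      have "g (i+jj) = \<psi> (int jj - int (i+jj)) (int (i+jj) - int n)" by (simp add: g_def)
      also have "\<dots> = h i" unfolding h_def by (rule arg_cong2[where f=\<psi>]) (use jj in auto)
      finally show "g (i+jj) = h i" .
    qed
    finally show ?thesis .
  qed
  have R: "(\<Sum>k<n. h k) = (\<Sum>k\<in>{0..<n-jj}. h k) + (\<Sum>k\<in>{n-jj..<n}. h k)"
    using sum.atLeastLessThan_concat[of 0 "n-jj" n h] jj by (simp add: lessThan_atLeast0)
  have R2: "(\<Sum>k\<in>{n-jj..<n}. h k) = (\<Sum>k\<in>{0..<jj}. \<psi> (int jj - int k - int n) (int k))"
  proof -
    have "(\<Sum>k\<in>{n-jj..<n}. h k) = (\<Sum>k\<in>{0+(n-jj)..<jj+(n-jj)}. h k)" using jj by simp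
    also have "\<dots> = (\<Sum>i\<in>{0..<jj}. h (i+(n-jj)))" by (rule sum.shift_bounds_nat_ivl)
    also have "\<dots> = (\<Sum>k\<in>{0..<jj}. \<psi> (int jj - int k - int n) (int k))"
    proof (rule sum.cong[OF refl])
      fix i assume "i \<in> {0..<jj}"
      show "h (i+(n-jj)) = \<psi> (int jj - int i - int n) (int i)"
        unfolding h_def by (rule arg_cong2[where f=\<psi>]) (use jj in auto)
    qed
    finally show ?thesis .
  qed
  show ?thesis using L L1 L2 R R2 unfolding g_def[symmetric] h_def[symmetric] by simp
qed

lemma comm1:
  assumes c: "A \<in> carrier_mat d d" "B \<in> carrier_mat d d" "X \<in> carrier_mat d d" "Y \<in> carrier_mat d d" "Z \<in> carrier_mat d d"
    and e: "A * X = B * Z"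
  shows "A * (X * Y) = B * (Z * Y)"
proof -
  have "A * (X * Y) = (A * X) * Y" using c by simp
  also have "\<dots> = (B * Z) * Y" using e by simp
  also have "\<dots> = B * (Z * Y)" using c by simp
  finally show ?thesis .
qed

lemma comm2:
  assumes c: "A \<in> carrier_mat d d" "B \<in> carrier_mat d d" "X \<in> carrier_mat d d" "Y \<in> carrier_mat d d" "Z \<in> carrier_mat d d"
    and e: "A * Y = B * Z" and ca: "A * X = X * A" and cb: "B * X = X * B"
  shows "A * (X * Y) = B * (X * Z)"
proof -
  have "A * (X * Y) = (A * X) * Y" using c by simp
  also have "\<dots> = (X * A) * Y" using ca by simp
  also have "\<dots> = X * (A * Y)" using c by simp
  also have "\<dots> = X * (B * Z)" using e by simp
  also have "\<dots> = (X * B) * Z" using c by simp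
  also have "\<dots> = (B * X) * Z" using cb by simp
  also have "\<dots> = B * (X * Z)" using c by simp
  finally show ?thesis .
qed

definition Fcond :: "nat \<Rightarrow> complex mat \<Rightarrow> complex mat \<Rightarrow> (int \<Rightarrow> complex mat) \<Rightarrow> bool" where
  "Fcond n A B T \<longleftrightarrow> (\<forall>j::int. 1 \<le> j \<and> j \<le> int n - 1 \<longrightarrow> A * T j = B * T (j - int n))"

lemma Fcond_Uprod:
  assumes Bs: "matrix_subalgebra d \<B>" and Bc: "commutative_set \<B>" and A1: "A1 \<in> \<B>" and B1: "B1 \<in> \<B>"
    and S: "blocks_in n \<B> S" and R: "blocks_in n \<B> R"
    and FS: "Fcond n A1 B1 S" and FR: "Fcond n A1 B1 R"
  shows "Fcond n A1 B1 (Uprod n d S R)"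
  unfolding Fcond_def
proof (intro allI impI)
  fix j :: int assume j: "1 \<le> j \<and> j \<le> int n - 1"
  define jj where "jj = nat j"
  have jj: "1 \<le> jj" "jj < n" "j = int jj" using j unfolding jj_def by auto
  have mulB: "X * Y \<in> \<B>" if "X \<in> \<B>" "Y \<in> \<B>" for X Y using Bs that unfolding matrix_subalgebra_def by blast
  have car: "X \<in> carrier_mat d d" if "X \<in> \<B>" for X using sub_car[OF Bs that] .
  have cA: "A1 \<in> carrier_mat d d" "B1 \<in> carrier_mat d d" using car A1 B1 by auto
  have U1: "Uprod n d S R j = Gm n d S R jj 0" using jj by (simp add: Uprod_def)
  have U2: "Uprod n d S R (j - int n) = Gm n d S R 0 (n - jj)" using jj by (simp add: Uprod_def nat_diff_distrib')
  have inS: "S (int p - int k) \<in> \<B>" "R (int p - int k) \<in> \<B>" if "p < n" "k < n" for p k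
    using blocks_inD[OF S that] blocks_inD[OF R that] by auto
  have inSI: "S i \<in> \<B>" "R i \<in> \<B>" if "\<bar>i\<bar> \<le> int n - 1" for i
    using S R that unfolding blocks_in_def by auto
  have inR0: "R (int k) \<in> \<B>" if "k < n" for k using inS(2)[of k 0] that by simp
  have e1: "A1 * Gm n d S R jj 0 = mat d d (\<lambda>(a,b). \<Sum>k<n. (A1 * (S (int jj - int k) * R (int k - int 0))) $$ (a,b))"
    unfolding Gm_def Eq_def using jj inS inR0 by (intro mult_summat cA) (auto intro!: car mulB)
  have e2 : "B1 * Gm n d S R 0 (n - jj) = mat d d (\<lambda>(a,b). \<Sum>k<n. (B1 * (S (int 0 - int k) * R (int k - int (n - jj)))) $$ (a,b))"
    unfolding Gm_def Eq_def using jj by (intro mult_summat cA) (auto intro!: car mulB inSI)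
  have tm: "A1 * (S (int jj - int k) * R (int k - int 0)) =
     (if k < jj then B1 * (S (int jj - int k - int n) * R (int k)) else B1 * (S (int jj - int k) * R (int k - int n)))"
    if k: "k < n" for k
  proof (cases "k < jj")
    case True
    have c1: "A1 * S (int jj - int k) = B1 * S (int jj - int k - int n)"
      using FS True jj unfolding Fcond_def by auto
    have "S (int jj - int k - int n) \<in> \<B>" using jj True k by (intro inSI) auto
    then show ?thesis using True c1 comm1[OF cA _ _ _ c1] inS[of jj k] inR0[of k] jj k car by auto
  next
    case False
    have c1: "A1 * R (int k) = B1 * R (int k - int n)"
      using FR False jj k unfolding Fcond_def by auto
    have X: "S (int jj - int k) \<in> \<B>" using inS jj k by auto
    have "R (int k - int n) \<in> \<B>" using jj False k by (intro inSI) auto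
    moreover have "A1 * S (int jj - int k) = S (int jj - int k) * A1" "B1 * S (int jj - int k) = S (int jj - int k) * B1"
      using Bc A1 B1 X unfolding commutative_set_def by auto
    ultimately show ?thesis using False comm2[OF cA car[OF X] _ _ c1] inR0[of k] k car by auto
  qed
  show "A1 * Uprod n d S R j = B1 * Uprod n d S R (j - int n)"
    unfolding U1 U2 e1 e2
  proof (rule eq_matI)
    fix a b assume "a < dim_row (mat d d (\<lambda>(a,b). \<Sum>k<n. (B1 * (S (int 0 - int k) * R (int k - int (n - jj)))) $$ (a,b)))"
       "b < dim_col (mat d d (\<lambda>(a,b). \<Sum>k<n. (B1 * (S (int 0 - int k) * R (int k - int (n - jj)))) $$ (a,b)))"
    then have ab: "a < d" "b < d" by auto
    have "(\<Sum>k<n. (A1 * (S (int jj - int k) * R (int k - int 0))) $$ (a,b))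
        = (\<Sum>k<n. if k < jj then (B1 * (S (int jj - int k - int n) * R (int k))) $$ (a,b)
                    else (B1 * (S (int jj - int k) * R (int k - int n))) $$ (a,b))"
    proof (intro sum.cong refl)
      fix k assume "k \<in> {..<n}"
      then show "(A1 * (S (int jj - int k) * R (int k - int 0))) $$ (a,b) = (if k < jj then (B1 * (S (int jj - int k - int n) * R (int k))) $$ (a,b)
                    else (B1 * (S (int jj - int k) * R (int k - int n))) $$ (a,b))"
        using tm[of k] by (simp only: lessThan_iff) (simp only: if_distrib[of "\<lambda>X. X $$ (a,b)"])
    qed
    also have "\<dots> = (\<Sum>k<n. (B1 * (S (0 - int k) * R (int k - int (n - jj)))) $$ (a,b))"
      using reidx[of jj n "\<lambda>u v. (B1 * (S u * R v)) $$ (a,b)"] jj by simp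
    finally show "mat d d (\<lambda>(a,b). \<Sum>k<n. (A1 * (S (int jj - int k) * R (int k - int 0))) $$ (a,b)) $$ (a,b)
       = mat d d (\<lambda>(a,b). \<Sum>k<n. (B1 * (S (int 0 - int k) * R (int k - int (n - jj)))) $$ (a,b)) $$ (a,b)"
      using ab by simp
  qed auto
qed

lemma bt_blk_car:
  assumes S: "dims n d S" and ij: "i < n*d" "j < n*d"
  shows "S (int (i div d) - int (j div d)) \<in> carrier_mat d d" "i mod d < d" "j mod d < d"
proof -
  have d: "d > 0" using ij by (cases d) auto
  have "i div d < n" "j div d < n" using ij by (simp_all add: less_mult_imp_div_less)
  then show "S (int (i div d) - int (j div d)) \<in> carrier_mat d d" using dimsD[OF S] by auto
  show "i mod d < d" "j mod d < d" using d by auto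
qed

lemma bt_add:
  assumes S: "dims n d S" and R: "dims n d R"
  shows "block_toeplitz n d S + block_toeplitz n d R = block_toeplitz n d (\<lambda>j. S j + R j)"
proof (rule eq_matI)
  fix i j assume "i < dim_row (block_toeplitz n d (\<lambda>j. S j + R j))" "j < dim_col (block_toeplitz n d (\<lambda>j. S j + R j))"
  then have ij: "i < n*d" "j < n*d" by auto
  show "(block_toeplitz n d S + block_toeplitz n d R) $$ (i, j) = block_toeplitz n d (\<lambda>j. S j + R j) $$ (i, j)"
    using ij bt_blk_car[OF S ij] bt_blk_car[OF R ij] by (simp add: bt_index)
qed auto

lemma bt_smult:
  assumes S: "dims n d S"
  shows "c \<cdot>\<^sub>m block_toeplitz n d S = block_toeplitz n d (\<lambda>j. c \<cdot>\<^sub>m S j)"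
proof (rule eq_matI)
  fix i j assume "i < dim_row (block_toeplitz n d (\<lambda>j. c \<cdot>\<^sub>m S j))" "j < dim_col (block_toeplitz n d (\<lambda>j. c \<cdot>\<^sub>m S j))"
  then have ij: "i < n*d" "j < n*d" by auto
  show "(c \<cdot>\<^sub>m block_toeplitz n d S) $$ (i, j) = block_toeplitz n d (\<lambda>j. c \<cdot>\<^sub>m S j) $$ (i, j)"
    using ij bt_blk_car[OF S ij] by (simp add: bt_index)
qed auto

lemma bt_zero: "block_toeplitz n d (\<lambda>j. 0\<^sub>m d d) = 0\<^sub>m (n*d) (n*d)"
proof (rule eq_matI)
  fix i j assume "i < dim_row (0\<^sub>m (n*d) (n*d))" "j < dim_col (0\<^sub>m (n*d) (n*d) :: complex mat)"
  then have ij: "i < n*d" "j < n*d" by auto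
  then have d: "d > 0" by (cases d) auto
  show "block_toeplitz n d (\<lambda>j. 0\<^sub>m d d) $$ (i, j) = 0\<^sub>m (n*d) (n*d) $$ (i, j)"
    using ij d by (simp add: bt_index)
qed auto

lemma F_set_alt: "F_set n d \<B> A B = {block_toeplitz n d T | T. blocks_in n \<B> T \<and> Fcond n A B T}"
  unfolding F_set_def Fcond_def by simp

lemma F_memI: "blocks_in n \<B> T \<Longrightarrow> Fcond n A B T \<Longrightarrow> X = block_toeplitz n d T \<Longrightarrow> X \<in> F_set n d \<B> A B"
  unfolding F_set_alt by blast

lemma F_alg:
  assumes Bs: "matrix_subalgebra d \<B>" and Bc: "commutative_set \<B>" and A1: "A1 \<in> \<B>" and B1: "B1 \<in> \<B>"
    and H: "\<And>S R. blocks_in n \<B> S \<Longrightarrow> blocks_in n \<B> R \<Longrightarrow> Fcond n A1 B1 S \<Longrightarrow> Fcond n A1 B1 R \<Longrightarrow> shiftid n S R"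
  shows "algebra_in (n*d) (F_set n d \<B> A1 B1) (toeplitz_set n d \<B>)"
proof -
  have car: "X \<in> carrier_mat d d" if "X \<in> \<B>" for X using sub_car[OF Bs that] .
  have cA: "A1 \<in> carrier_mat d d" "B1 \<in> carrier_mat d d" using car A1 B1 by auto
  have Bz: "0\<^sub>m d d \<in> \<B>" and Badd: "\<And>X Y. X \<in> \<B> \<Longrightarrow> Y \<in> \<B> \<Longrightarrow> X + Y \<in> \<B>"
    and Bsm: "\<And>c X. X \<in> \<B> \<Longrightarrow> c \<cdot>\<^sub>m X \<in> \<B>"
    using Bs unfolding matrix_subalgebra_def by auto
  let ?F = "F_set n d \<B> A1 B1"
  have sub: "?F \<subseteq> toeplitz_set n d \<B>" unfolding F_set_def toeplitz_set_def by blast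
  have z: "0\<^sub>m (n*d) (n*d) \<in> ?F"
  proof -
    have b: "blocks_in n \<B> (\<lambda>j. 0\<^sub>m d d)" using Bz unfolding blocks_in_def by auto
    have f: "Fcond n A1 B1 (\<lambda>j. 0\<^sub>m d d)" unfolding Fcond_def using cA
      by (simp add: right_mult_zero_mat)
    show ?thesis by (rule F_memI[OF b f bt_zero[symmetric]])
  qed
  have add: "X + Y \<in> ?F" if X: "X \<in> ?F" and Y: "Y \<in> ?F" for X Y
  proof -
    obtain S where S: "X = block_toeplitz n d S" "blocks_in n \<B> S" "Fcond n A1 B1 S" using X unfolding F_set_alt by blast
    obtain R where R: "Y = block_toeplitz n d R" "blocks_in n \<B> R" "Fcond n A1 B1 R" using Y unfolding F_set_alt by blast
    have "blocks_in n \<B> (\<lambda>j. S j + R j)" using S(2) R(2) Badd unfolding blocks_in_def by auto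
    moreover have "Fcond n A1 B1 (\<lambda>j. S j + R j)" unfolding Fcond_def
    proof (intro allI impI)
      fix j :: int assume j: "1 \<le> j \<and> j \<le> int n - 1"
      have c: "S j \<in> carrier_mat d d" "R j \<in> carrier_mat d d" "S (j - int n) \<in> carrier_mat d d" "R (j - int n) \<in> carrier_mat d d"
        using S(2) R(2) j car unfolding blocks_in_def by auto
      have "A1 * (S j + R j) = A1 * S j + A1 * R j" using c cA by (simp add: mult_add_distrib_mat)
      also have "\<dots> = B1 * S (j - int n) + B1 * R (j - int n)" using S(3) R(3) j unfolding Fcond_def by auto
      also have "\<dots> = B1 * (S (j - int n) + R (j - int n))" using c cA by (simp add: mult_add_distrib_mat)
      finally show "A1 * (S j + R j) = B1 * (S (j - int n) + R (j - int n))" .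
    qed
    moreover have "X + Y = block_toeplitz n d (\<lambda>j. S j + R j)"
      unfolding S(1) R(1) by (rule bt_add; rule blocks_dims[OF Bs]; fact)
    ultimately show ?thesis by (intro F_memI)
  qed
  have sm: "c \<cdot>\<^sub>m X \<in> ?F" if X: "X \<in> ?F" for X c
  proof -
    obtain S where S: "X = block_toeplitz n d S" "blocks_in n \<B> S" "Fcond n A1 B1 S" using X unfolding F_set_alt by blast
    have "blocks_in n \<B> (\<lambda>j. c \<cdot>\<^sub>m S j)" using S(2) Bsm unfolding blocks_in_def by auto
    moreover have "Fcond n A1 B1 (\<lambda>j. c \<cdot>\<^sub>m S j)" unfolding Fcond_def
    proof (intro allI impI)
      fix j :: int assume j: "1 \<le> j \<and> j \<le> int n - 1"
      have c: "S j \<in> carrier_mat d d" "S (j - int n) \<in> carrier_mat d d"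
        using S(2) j car unfolding blocks_in_def by auto
      have "A1 * (c \<cdot>\<^sub>m S j) = c \<cdot>\<^sub>m (A1 * S j)" using c cA by (simp add: mult_smult_distrib)
      also have "\<dots> = c \<cdot>\<^sub>m (B1 * S (j - int n))" using S(3) j unfolding Fcond_def by auto
      also have "\<dots> = B1 * (c \<cdot>\<^sub>m S (j - int n))" using c cA by (simp add: mult_smult_distrib)
      finally show "A1 * (c \<cdot>\<^sub>m S j) = B1 * (c \<cdot>\<^sub>m S (j - int n))" .
    qed
    moreover have "c \<cdot>\<^sub>m X = block_toeplitz n d (\<lambda>j. c \<cdot>\<^sub>m S j)"
      unfolding S(1) by (rule bt_smult; rule blocks_dims[OF Bs]; fact)
    ultimately show ?thesis by (intro F_memI)
  qed
  have mul: "X * Y \<in> ?F" if X: "X \<in> ?F" and Y: "Y \<in> ?F" for X Y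
  proof -
    obtain S where S: "X = block_toeplitz n d S" "blocks_in n \<B> S" "Fcond n A1 B1 S" using X unfolding F_set_alt by blast
    obtain R where R: "Y = block_toeplitz n d R" "blocks_in n \<B> R" "Fcond n A1 B1 R" using Y unfolding F_set_alt by blast
    have "X * Y = block_toeplitz n d (Uprod n d S R)"
      unfolding S(1) R(1) by (rule prod_bt[OF blocks_dims[OF Bs S(2)] blocks_dims[OF Bs R(2)] H[OF S(2) R(2) S(3) R(3)]])
    moreover have "blocks_in n \<B> (Uprod n d S R)" by (rule Uprod_blocks[OF Bs S(2) R(2)])
    moreover have "Fcond n A1 B1 (Uprod n d S R)" by (rule Fcond_Uprod[OF Bs Bc A1 B1 S(2) R(2) S(3) R(3)])
    ultimately show ?thesis by (intro F_memI)
  qed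
  have "?F \<subseteq> carrier_mat (n*d) (n*d)" unfolding F_set_def by auto
  then show ?thesis unfolding algebra_in_def matrix_subalgebra_def
    using sub z add sm mul by (intro conjI ballI allI impI) auto
qed

lemma inv_comm:
  assumes Bs: "matrix_subalgebra d \<B>" and Bc: "commutative_set \<B>" and M: "M \<in> \<B>" and inv: "invertible_mat M"
  shows "\<exists>N. N \<in> carrier_mat d d \<and> N * M = 1\<^sub>m d \<and> (\<forall>X\<in>\<B>. N * X = X * N)"
proof -
  have cM: "M \<in> carrier_mat d d" using sub_car[OF Bs M] .
  obtain N where N1: "M * N = 1\<^sub>m (dim_row M)" and N2: "N * M = 1\<^sub>m (dim_row N)"
    using inv unfolding invertible_mat_def inverts_mat_def by blast
  have cN: "N \<in> carrier_mat d d"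
  proof -
    have "dim_col N = d" using N1 cM by (metis carrier_matD(1) index_mult_mat(3) index_one_mat(3))
    moreover have "dim_row N = d" using N2 cM by (metis carrier_matD(2) index_mult_mat(3) index_one_mat(3))
    ultimately show ?thesis by auto
  qed
  have N1': "M * N = 1\<^sub>m d" and N2': "N * M = 1\<^sub>m d" using N1 N2 cM cN by auto
  have "N * X = X * N" if X: "X \<in> \<B>" for X
  proof -
    have cX: "X \<in> carrier_mat d d" using sub_car[OF Bs X] .
    have c: "X * M = M * X" using Bc X M unfolding commutative_set_def by auto
    have "N * X = N * X * (M * N)" using cN cX N1' by simp
    also have "\<dots> = N * (X * M) * N" using cN cX cM by (simp add: assoc_mult_mat[of _ d d _ d _ d])
    also have "\<dots> = N * (M * X) * N" using c by simp
    also have "\<dots> = (N * M) * X * N" using cN cX cM by (simp add: assoc_mult_mat[of _ d d _ d _ d])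
    also have "\<dots> = X * N" using cN cX N2' by simp
    finally show ?thesis .
  qed
  then show ?thesis using cN N2' by blast
qed

lemma swapK:
  assumes c: "K \<in> carrier_mat d d" "X \<in> carrier_mat d d" "Y \<in> carrier_mat d d" and e: "K * X = X * K"
  shows "X * (K * Y) = (K * X) * Y"
  using c e by (simp add: assoc_mult_mat[of _ d d _ d _ d])

lemma shiftid_Binv:
  assumes Bs: "matrix_subalgebra d \<B>" and Bc: "commutative_set \<B>" and A1: "A1 \<in> \<B>" and B1: "B1 \<in> \<B>"
    and inv: "invertible_mat B1"
    and S: "blocks_in n \<B> S" and R: "blocks_in n \<B> R" and FS: "Fcond n A1 B1 S" and FR: "Fcond n A1 B1 R"
  shows "shiftid n S R"
proof -
  obtain N where cN: "N \<in> carrier_mat d d" and NB: "N * B1 = 1\<^sub>m d" and Nc: "\<forall>X\<in>\<B>. N * X = X * N"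
    using inv_comm[OF Bs Bc B1 inv] by blast
  have car: "X \<in> carrier_mat d d" if "X \<in> \<B>" for X using sub_car[OF Bs that] .
  define K where "K = N * A1"
  have cK: "K \<in> carrier_mat d d" unfolding K_def using cN car[OF A1] by simp
  have Kc: "K * X = X * K" if X: "X \<in> \<B>" for X
  proof -
    have "A1 * X = X * A1" using Bc A1 X unfolding commutative_set_def by auto
    then show ?thesis unfolding K_def using Nc X cN car[OF A1] car[OF X]
      by (simp add: assoc_mult_mat[of _ d d _ d _ d]) (metis assoc_mult_mat)
  qed
  have solve: "Z (i - int n) = K * Z i" if Z: "blocks_in n \<B> Z" "Fcond n A1 B1 Z" and i: "1 \<le> i" "i \<le> int n - 1" for Z i
  proof -
    have z1: "Z i \<in> carrier_mat d d" "Z (i - int n) \<in> carrier_mat d d" using Z(1) i car unfolding blocks_in_def by auto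
    have "Z (i - int n) = (N * B1) * Z (i - int n)" using NB z1 by simp
    also have "\<dots> = N * (B1 * Z (i - int n))" using cN car[OF B1] z1 by simp
    also have "\<dots> = N * (A1 * Z i)" using Z(2) i unfolding Fcond_def by auto
    also have "\<dots> = K * Z i" unfolding K_def using cN car[OF A1] z1 by simp
    finally show ?thesis .
  qed
  show ?thesis unfolding shiftid_def
  proof (intro allI impI)
    fix i j :: int assume ij: "1 \<le> i \<and> i \<le> int n - 1 \<and> 1 \<le> j \<and> j \<le> int n - 1"
    have inB: "S i \<in> \<B>" "R j \<in> \<B>" using S R ij unfolding blocks_in_def by auto
    have "S i * R (j - int n) = S i * (K * R j)" using solve[OF R FR] ij by auto
    also have "\<dots> = (K * S i) * R j"
      by (rule swapK[OF cK car car Kc]) (use inB in auto)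
    also have "\<dots> = S (i - int n) * R j" using solve[OF S FS] ij by auto
    finally show "S i * R (j - int n) = S (i - int n) * R j" .
  qed
qed

lemma shiftid_Ainv:
  assumes Bs: "matrix_subalgebra d \<B>" and Bc: "commutative_set \<B>" and A1: "A1 \<in> \<B>" and B1: "B1 \<in> \<B>"
    and inv: "invertible_mat A1"
    and S: "blocks_in n \<B> S" and R: "blocks_in n \<B> R" and FS: "Fcond n A1 B1 S" and FR: "Fcond n A1 B1 R"
  shows "shiftid n S R"
proof -
  obtain N where cN: "N \<in> carrier_mat d d" and NA: "N * A1 = 1\<^sub>m d" and Nc: "\<forall>X\<in>\<B>. N * X = X * N"
    using inv_comm[OF Bs Bc A1 inv] by blast
  have car: "X \<in> carrier_mat d d" if "X \<in> \<B>" for X using sub_car[OF Bs that] .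
  define K where "K = N * B1"
  have cK: "K \<in> carrier_mat d d" unfolding K_def using cN car[OF B1] by simp
  have Kc: "K * X = X * K" if X: "X \<in> \<B>" for X
  proof -
    have "B1 * X = X * B1" using Bc B1 X unfolding commutative_set_def by auto
    then show ?thesis unfolding K_def using Nc X cN car[OF B1] car[OF X]
      by (simp add: assoc_mult_mat[of _ d d _ d _ d]) (metis assoc_mult_mat)
  qed
  have solve: "Z i = K * Z (i - int n)" if Z: "blocks_in n \<B> Z" "Fcond n A1 B1 Z" and i: "1 \<le> i" "i \<le> int n - 1" for Z i
  proof -
    have z1: "Z i \<in> carrier_mat d d" "Z (i - int n) \<in> carrier_mat d d" using Z(1) i car unfolding blocks_in_def by auto
    have "Z i = (N * A1) * Z i" using NA z1 by simp
    also have "\<dots> = N * (A1 * Z i)" using cN car[OF A1] z1 by simp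
    also have "\<dots> = N * (B1 * Z (i - int n))" using Z(2) i unfolding Fcond_def by auto
    also have "\<dots> = K * Z (i - int n)" unfolding K_def using cN car[OF B1] z1 by simp
    finally show ?thesis .
  qed
  show ?thesis unfolding shiftid_def
  proof (intro allI impI)
    fix i j :: int assume ij: "1 \<le> i \<and> i \<le> int n - 1 \<and> 1 \<le> j \<and> j \<le> int n - 1"
    have inB: "S (i - int n) \<in> \<B>" "R (j - int n) \<in> \<B>" using S R ij unfolding blocks_in_def by auto
    have "S i * R (j - int n) = (K * S (i - int n)) * R (j - int n)" using solve[OF S FS] ij by auto
    also have "\<dots> = S (i - int n) * (K * R (j - int n))"
      by (rule swapK[OF cK car car Kc, symmetric]) (use inB in auto)
    also have "\<dots> = S (i - int n) * R j" using solve[OF R FR] ij by auto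
    finally show "S i * R (j - int n) = S (i - int n) * R j" .
  qed
qed

theorem corollary4p6:
  fixes n d :: nat and \<B> \<A> :: "complex mat set"
  assumes "n \<ge> 2" and "d \<ge> 1"
    and "maximal_commutative_subalgebra d \<B>"
    and "maximal_algebra_in (n * d) \<A> (toeplitz_set n d \<B>)"
    and "\<exists>T. block_toeplitz n d T \<in> \<A> \<and> blocks_in n \<B> T \<and>
           (\<exists>p::int. p \<noteq> 0 \<and> \<bar>p\<bar> \<le> int n - 1 \<and> invertible_mat (T p))"
  shows "\<exists>A\<in>\<B>. \<exists>B\<in>\<B>. \<A> = F_set n d \<B> A B"
proof -
  have Bs: "matrix_subalgebra d \<B>" and Bc: "commutative_set \<B>"
    using assms(3) unfolding maximal_commutative_subalgebra_def by auto
  have Aalg: "algebra_in (n*d) \<A> (toeplitz_set n d \<B>)"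
    and Amax: "\<And>S'. algebra_in (n*d) S' (toeplitz_set n d \<B>) \<Longrightarrow> \<A> \<subseteq> S' \<Longrightarrow> S' = \<A>"
    using assms(4) unfolding maximal_algebra_in_def by auto
  have Asub: "\<A> \<subseteq> toeplitz_set n d \<B>" and Amul: "\<And>X Y. X \<in> \<A> \<Longrightarrow> Y \<in> \<A> \<Longrightarrow> X * Y \<in> \<A>"
    using Aalg unfolding algebra_in_def matrix_subalgebra_def by auto
  obtain T p where T: "block_toeplitz n d T \<in> \<A>" "blocks_in n \<B> T"
    and p: "p \<noteq> 0" "\<bar>p\<bar> \<le> int n - 1" "invertible_mat (T p)"
    using assms(5) by blast
  have repr: "\<exists>S. X = block_toeplitz n d S \<and> blocks_in n \<B> S" if "X \<in> \<A>" for X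
    using Asub that unfolding toeplitz_set_def by blast
  have shiftA: "shiftid n S R" if S: "block_toeplitz n d S \<in> \<A>" "blocks_in n \<B> S"
    and R: "block_toeplitz n d R \<in> \<A>" "blocks_in n \<B> R" for S R
  proof -
    obtain U where U: "block_toeplitz n d S * block_toeplitz n d R = block_toeplitz n d U"
      using repr[OF Amul[OF S(1) R(1)]] by blast
    show ?thesis unfolding shiftid_def
      using shift_int[OF blocks_dims[OF Bs S(2)] blocks_dims[OF Bs R(2)] U] by blast
  qed
  have TB: "T i \<in> \<B>" if "\<bar>i\<bar> \<le> int n - 1" for i using T(2) that unfolding blocks_in_def by auto
  have car: "X \<in> carrier_mat d d" if "X \<in> \<B>" for X using sub_car[OF Bs that] .
  show ?thesis
  proof (cases "p > 0")
    case True
    define A1 where "A1 = T (p - int n)"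
    define B1 where "B1 = T p"
    have A1: "A1 \<in> \<B>" and B1: "B1 \<in> \<B>" unfolding A1_def B1_def using p True by (auto intro!: TB)
    have alg: "algebra_in (n*d) (F_set n d \<B> A1 B1) (toeplitz_set n d \<B>)"
      by (rule F_alg[OF Bs Bc A1 B1 shiftid_Binv[OF Bs Bc A1 B1]]) (use p B1_def in auto)
    have "\<A> \<subseteq> F_set n d \<B> A1 B1"
    proof
      fix X assume X: "X \<in> \<A>"
      obtain S where S: "X = block_toeplitz n d S" "blocks_in n \<B> S" using repr[OF X] by blast
      have sh: "shiftid n S T" using shiftA[OF _ S(2) T] X S(1) by simp
      have "Fcond n A1 B1 S" unfolding Fcond_def
      proof (intro allI impI)
        fix i :: int assume i: "1 \<le> i \<and> i \<le> int n - 1"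
        have Si: "S i \<in> \<B>" using S(2) i unfolding blocks_in_def by auto
        have "A1 * S i = S i * A1" using Bc A1 Si unfolding commutative_set_def by auto
        also have "\<dots> = S (i - int n) * B1" using sh i p True unfolding shiftid_def A1_def B1_def by auto
        also have "\<dots> = B1 * S (i - int n)"
          using Bc B1 S(2) i unfolding commutative_set_def blocks_in_def by auto
        finally show "A1 * S i = B1 * S (i - int n)" .
      qed
      then show "X \<in> F_set n d \<B> A1 B1" by (rule F_memI[OF S(2) _ S(1)])
    qed
    then have "F_set n d \<B> A1 B1 = \<A>" by (rule Amax[OF alg])
    then show ?thesis using A1 B1 by blast
  next
    case False
    then have pn: "p < 0" using p by auto
    define A1 where "A1 = T p"
    define B1 where "B1 = T (p + int n)"
    have A1: "A1 \<in> \<B>" and B1: "B1 \<in> \<B>" unfolding A1_def B1_def using p pn by (auto intro!: TB)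
    have alg: "algebra_in (n*d) (F_set n d \<B> A1 B1) (toeplitz_set n d \<B>)"
      by (rule F_alg[OF Bs Bc A1 B1 shiftid_Ainv[OF Bs Bc A1 B1]]) (use p A1_def in auto)
    have "\<A> \<subseteq> F_set n d \<B> A1 B1"
    proof
      fix X assume X: "X \<in> \<A>"
      obtain S where S: "X = block_toeplitz n d S" "blocks_in n \<B> S" using repr[OF X] by blast
      have sh: "shiftid n T S" using shiftA[OF T _ S(2)] X S(1) by simp
      have "Fcond n A1 B1 S" unfolding Fcond_def
      proof (intro allI impI)
        fix j :: int assume j: "1 \<le> j \<and> j \<le> int n - 1"
        have "T (p + int n) * S (j - int n) = T (p + int n - int n) * S j"
          using sh j p pn unfolding shiftid_def by auto
        then show "A1 * S j = B1 * S (j - int n)" unfolding A1_def B1_def by simp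
      qed
      then show "X \<in> F_set n d \<B> A1 B1" by (rule F_memI[OF S(2) _ S(1)])
    qed
    then have "F_set n d \<B> A1 B1 = \<A>" by (rule Amax[OF alg])
    then show ?thesis using A1 B1 by blast
  qed
qed

end
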